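(* Let $C_{\mathrm G}=\frac{5\cdot 3^{4/5}}{\pi^{7/5}}\approx 2.42493$ and let $Z_d\sim\mathcal N(0,1/d)$. Then for every dimension $d=2^m$ ($m\ge1$ an integer), \[ \sup_{u\in S^{d-1}}\ \sup_{1\le k\le d}\ \mathrm{K}\bigl([T(u)]_k,Z_d\bigr)\le C_{\mathrm G}\,d^{-1/5}. \]
   Context: $H$ is the unnormalized $d\times d$ Walsh--Hadamard matrix ($H_1=(1)$, $H_{2n}=\begin{pmatrix}H_n&H_n\\H_n&-H_n\end{pmatrix}$). $D^{(1)},D^{(2)}$ are independent diagonal matrices with i.i.d. Rademacher diagonal entries. For deterministic $u\in S^{d-1}$ (the unit sphere), $T(u)=\frac1d HD^{(1)}HD^{(2)}u$, and $[v]_k$ is the $k$th coordinate. $\mathrm{K}(A,B)=\sup_{t\in\mathbb{R}}|\mathbb{P}(A\le t)-\mathbb{P}(B\le t)|$ is the Kolmogorov distance. *)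

theory Defs
  imports "HOL-Probability.Probability"
begin

text \<open>Unnormalized Walsh--Hadamard matrix of size 2^m, indices 0..2^m-1,
  defined by the recursion H_1 = (1), H_2n = [[H_n, H_n],[H_n, -H_n]].\<close>
fun hadamard :: "nat \<Rightarrow> nat \<Rightarrow> nat \<Rightarrow> real" where
  "hadamard 0 i j = 1"
| "hadamard (Suc m) i j =
     (let n = 2 ^ m in
      if i < n \<and> j < n then hadamard m i j
      else if i < n then hadamard m i (j - n)
      else if j < n then hadamard m (i - n) j
      else - hadamard m (i - n) (j - n))"

text \<open>Rademacher sign vectors of length d (entries outside 0..d-1 are undefined).\<close>
definition sign_vectors :: "nat \<Rightarrow> (nat \<Rightarrow> real) set" where
  "sign_vectors d = Pi\<^sub>E {..<d} (\<lambda>_. {-1, 1})"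

text \<open>k-th coordinate of T(u) = (1/d) H D1 H D2 u for d = 2^m, signs e1, e2.\<close>
definition T_coord :: "nat \<Rightarrow> (nat \<Rightarrow> real) \<Rightarrow> (nat \<Rightarrow> real) \<Rightarrow> (nat \<Rightarrow> real) \<Rightarrow> nat \<Rightarrow> real" where
  "T_coord m e1 e2 u k =
     (1 / 2 ^ m) * (\<Sum>j<2^m. hadamard m k j * e1 j *
        (\<Sum>l<2^m. hadamard m j l * e2 l * u l))"

definition T_law :: "nat \<Rightarrow> (nat \<Rightarrow> real) \<Rightarrow> nat \<Rightarrow> real measure" where
  "T_law m u k = measure_pmf (map_pmf (\<lambda>(e1, e2). T_coord m e1 e2 u k)
      (pmf_of_set (sign_vectors (2^m) \<times> sign_vectors (2^m))))"

definition gauss_law :: "real \<Rightarrow> real measure" where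
  "gauss_law v = density lborel (normal_density 0 (sqrt v))"

definition kolmogorov_dist :: "real measure \<Rightarrow> real measure \<Rightarrow> real" where
  "kolmogorov_dist M N = (SUP t. \<bar>measure M {..t} - measure N {..t}\<bar>)"

definition C_G :: real where
  "C_G = 5 * 3 powr (4/5) / pi powr (7/5)"

end

theory Submission
  imports Defs
begin
definition SN :: "real measure" where "SN = density lborel std_normal_density"
definition Phi :: "real \<Rightarrow> real" where "Phi x = measure SN {..x}"

lemma SN_prob: "prob_space SN"
  unfolding SN_def by (rule prob_space_normal_density) simp

lemma sets_SN[simp, measurable_cong]: "sets SN = sets borel"
  unfolding SN_def by simp

lemma cont_std_nd: "continuous_on A std_normal_density"
  unfolding std_normal_density_def by (intro continuous_intros) auto

lemma SN_Icc: "a \<le> x \<Longrightarrow> measure SN {a..x} = integral {a..x} std_normal_density"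
proof -
  assume ax: "a \<le> x"
  have hi: "(std_normal_density has_integral integral {a..x} std_normal_density) {a..x}"
    by (intro integrable_integral integrable_continuous_interval cont_std_nd)
  have "emeasure SN {a..x} = (\<integral>\<^sup>+ y. ennreal (std_normal_density y) * indicator {a..x} y \<partial>lborel)"
    unfolding SN_def by (subst emeasure_density) auto
  also have "\<dots> = ennreal (integral {a..x} std_normal_density)"
    by (rule nn_integral_has_integral_lebesgue'[OF _ hi]) auto
  finally show ?thesis
    by (simp add: measure_def) (metis enn2real_ennreal integral_nonneg cont_std_nd integrable_continuous_interval normal_density_nonneg)
qed

lemma Phi_split: "a \<le> x \<Longrightarrow> Phi x = measure SN {..<a} + integral {a..x} std_normal_density"
proof -
  assume ax: "a \<le> x"
  interpret P: prob_space SN by (rule SN_prob)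
  have "{..x} = {..<a} \<union> {a..x}" using ax by auto
  then have "Phi x = measure SN ({..<a} \<union> {a..x})" by (simp add: Phi_def)
  also have "\<dots> = measure SN {..<a} + measure SN {a..x}"
    by (rule P.finite_measure_Union) auto
  finally show ?thesis using SN_Icc[OF ax] by simp
qed

lemma Phi_deriv: "(Phi has_real_derivative std_normal_density x) (at x)"
proof -
  define a b where "a = x - 1" and "b = x + 1"
  have "((\<lambda>y. integral {a..y} std_normal_density) has_real_derivative std_normal_density x) (at x within {a..b})"
    by (rule integral_has_real_derivative) (auto simp: a_def b_def intro: cont_std_nd)
  then have "((\<lambda>y. integral {a..y} std_normal_density) has_real_derivative std_normal_density x) (at x)"
    by (simp add: at_within_Icc_at a_def b_def)
  then have "((\<lambda>y. measure SN {..<a} + integral {a..y} std_normal_density) has_real_derivative std_normal_density x) (at x)"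
    by (auto intro!: derivative_eq_intros)
  then show ?thesis
    by (rule has_field_derivative_transform_within_open[where S="{a<..<b}"])
       (auto simp: a_def b_def intro!: Phi_split[symmetric])
qed

abbreviation phi :: "real \<Rightarrow> real" where "phi \<equiv> std_normal_density"

definition Dg :: "nat \<Rightarrow> real \<Rightarrow> real" where
  "Dg k z = (if k = 0 then Phi z else if k = 1 then phi z else if k = 2 then - z * phi z
     else if k = 3 then (z\<^sup>2 - 1) * phi z else (3 * z - z ^ 3) * phi z)"

lemma phi_deriv: "(phi has_real_derivative (- z * phi z)) (at z)"
  unfolding std_normal_density_def
  by (auto intro!: derivative_eq_intros simp: field_simps power2_eq_square)

lemma Dg_deriv: "k < 4 \<Longrightarrow> (Dg k has_real_derivative Dg (Suc k) z) (at z)"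
proof -
  assume "k < 4"
  then consider "k = 0" | "k = 1" | "k = 2" | "k = 3" by linarith
  then show ?thesis
  proof cases
    case 1 then show ?thesis unfolding Dg_def[abs_def] using Phi_deriv by simp
  next
    case 2 then show ?thesis unfolding Dg_def[abs_def] using phi_deriv by simp
  next
    case 3 then show ?thesis unfolding Dg_def[abs_def]
      by (auto intro!: derivative_eq_intros phi_deriv simp: algebra_simps power2_eq_square)
  next
    case 4 then show ?thesis unfolding Dg_def[abs_def]
      by (auto intro!: derivative_eq_intros phi_deriv simp: algebra_simps power2_eq_square power3_eq_cube)
  qed
qed

lemma poly_aux: "(w::real) \<ge> 0 \<Longrightarrow> \<bar>3 * w - w ^ 3\<bar> \<le> 2 + w\<^sup>2 + w^4/4"
proof -
  assume w: "w \<ge> 0"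
  have a: "3 * w \<le> 2 + w\<^sup>2 + w^4/4"
  proof -
    have "0 \<le> (w\<^sup>2/2 - 1/2)\<^sup>2" "0 \<le> (w - 1)\<^sup>2" by simp_all
    then show ?thesis by (simp add: power2_eq_square power4_eq_xxxx algebra_simps)
  qed
  have b: "w^3 \<le> w\<^sup>2 + w^4/4"
  proof -
    have "0 \<le> (w\<^sup>2/2 - w)\<^sup>2" by simp
    then show ?thesis by (simp add: power2_eq_square power3_eq_cube algebra_simps power4_eq_xxxx)
  qed
  have c: "0 \<le> w^3" using w by simp
  show ?thesis
  proof (cases "w^3 \<le> 3 * w")
    case True then show ?thesis using a c by (smt (verit))
  next
    case False then show ?thesis using b w by (smt (verit))
  qed
qed

lemma exp_bound_aux: "\<bar>3 * z - z ^ 3\<bar> \<le> 2 * exp ((z::real)\<^sup>2 / 2)"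
proof -
  have e: "1 + z\<^sup>2/2 + (z\<^sup>2/2)\<^sup>2/2 \<le> exp (z\<^sup>2 / 2)"
    by (rule exp_lower_Taylor_quadratic) simp
  have "\<bar>3 * z - z ^ 3\<bar> = \<bar>3 * \<bar>z\<bar> - \<bar>z\<bar> ^ 3\<bar>"
    by (cases "z \<ge> 0") (auto simp: power3_eq_cube)
  also have "\<dots> \<le> 2 + \<bar>z\<bar>\<^sup>2 + \<bar>z\<bar>^4/4" by (rule poly_aux) simp
  finally have p: "\<bar>3 * z - z ^ 3\<bar> \<le> 2 + z\<^sup>2 + z^4/4" by (simp add: power_even_abs)
  show ?thesis using e p by (simp add: power2_eq_square power4_eq_xxxx)
qed

lemma taylor_bound:
  fixes f :: "real \<Rightarrow> real"
  assumes n: "n > 0" and d0: "diff 0 = f"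
    and der: "\<And>m t. m < n \<Longrightarrow> min c x \<le> t \<Longrightarrow> t \<le> max c x \<Longrightarrow> DERIV (diff m) t :> diff (Suc m) t"
    and bd: "\<And>t. min c x \<le> t \<Longrightarrow> t \<le> max c x \<Longrightarrow> \<bar>diff n t\<bar> \<le> B"
  shows "\<bar>f x - (\<Sum>m<n. diff m c / fact m * (x - c)^m)\<bar> \<le> B / fact n * \<bar>x - c\<bar>^n"
proof (cases "x = c")
  case True
  have B: "0 \<le> B" using bd[of c] True by (smt (verit) max.cobounded1 min.cobounded1)
  have "(\<Sum>m<n. diff m c / fact m * (x - c)^m) = (\<Sum>m\<in>{0}. diff m c / fact m * (x - c)^m)"
    using True n by (intro sum.mono_neutral_right) auto
  then show ?thesis using True d0 B by simp
next
  case False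
  obtain t where t: "(if x < c then x < t \<and> t < c else c < t \<and> t < x)"
    and eq: "f x = (\<Sum>m<n. (diff m c / fact m) * (x - c)^m) + (diff n t / fact n) * (x - c)^n"
    using Taylor[where diff=diff and f=f and n=n and a="min c x" and b="max c x" and c=c and x=x, OF n d0] der False by auto
  have tb: "min c x \<le> t" "t \<le> max c x" using t by (auto split: if_splits)
  have "\<bar>diff n t / fact n * (x - c)^n\<bar> = \<bar>diff n t\<bar> / fact n * \<bar>x - c\<bar>^n"
    by (simp add: abs_mult power_abs)
  also have "\<dots> \<le> B / fact n * \<bar>x - c\<bar>^n"
    using bd[OF tb] by (intro mult_right_mono divide_right_mono) auto
  finally show ?thesis using eq by simp
qed

definition Mc :: real where "Mc = 2 / sqrt (2 * pi)"

lemma Dg4_bound: "\<bar>Dg 4 z\<bar> \<le> Mc"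
proof -
  have "\<bar>Dg 4 z\<bar> = \<bar>3 * z - z ^ 3\<bar> * exp (- z\<^sup>2 / 2) / sqrt (2 * pi)"
    by (simp add: Dg_def std_normal_density_def abs_mult)
  also have "\<dots> \<le> 2 * exp (z\<^sup>2 / 2) * exp (- z\<^sup>2 / 2) / sqrt (2 * pi)"
    by (intro divide_right_mono mult_right_mono exp_bound_aux) auto
  also have "\<dots> = Mc" by (simp add: Mc_def mult.assoc flip: exp_add)
  finally show ?thesis .
qed

lemma phi_bound: "phi z \<le> 1 / sqrt (2 * pi)"
  by (simp add: std_normal_density_def divide_right_mono)

lemma Mc_pos: "0 < Mc" by (simp add: Mc_def)

lemma taylor_x:
  assumes r: "r > 0"
  shows "\<bar>(Phi ((t - (y + c)) / r) + Phi ((t - (y - c)) / r)) / 2 - Phi ((t - y) / r)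
          - c\<^sup>2 / (2 * r\<^sup>2) * Dg 2 ((t - y) / r)\<bar> \<le> Mc * c^4 / (24 * r^4)"
proof -
  define hd where "hd k x = (-1/r)^k * Dg k ((t - x) / r)" for k x
  have der: "DERIV (hd m) x :> hd (Suc m) x" if "m < 4" for m x
  proof -
    have "((\<lambda>x. Dg m ((t - x) / r)) has_real_derivative Dg (Suc m) ((t - x) / r) * (-1/r)) (at x)"
      by (rule DERIV_chain2[OF Dg_deriv[OF that]]) (use r in \<open>auto intro!: derivative_eq_intros\<close>)
    then show ?thesis unfolding hd_def using r
      by (auto intro!: derivative_eq_intros simp: mult_ac)
  qed
  have h0: "hd 0 = (\<lambda>x. Phi ((t - x) / r))" by (auto simp: hd_def Dg_def)
  have bd: "\<bar>hd 4 x\<bar> \<le> Mc / r^4" for x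
    using Dg4_bound[of "(t - x) / r"] r by (simp add: hd_def abs_mult power_divide divide_simps)
  have T1: "\<bar>Phi ((t - (y + c)) / r) - (\<Sum>m<4. hd m y / fact m * ((y + c) - y)^m)\<bar> \<le> Mc / r^4 / fact 4 * \<bar>(y + c) - y\<bar>^4"
    by (rule taylor_bound[where diff=hd and f="\<lambda>x. Phi ((t - x) / r)"]) (auto simp: h0 der bd)
  have T2: "\<bar>Phi ((t - (y - c)) / r) - (\<Sum>m<4. hd m y / fact m * ((y - c) - y)^m)\<bar> \<le> Mc / r^4 / fact 4 * \<bar>(y - c) - y\<bar>^4"
    by (rule taylor_bound[where diff=hd and f="\<lambda>x. Phi ((t - x) / r)"]) (auto simp: h0 der bd)
  have s4: "(\<Sum>m<4. g m) = g 0 + g 1 + g 2 + g 3" for g :: "nat \<Rightarrow> real"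
    by (simp add: eval_nat_numeral)
  have fact4: "fact 4 = (24::real)" "fact 3 = (6::real)" "fact 2 = (2::real)"
    by (simp_all add: eval_nat_numeral)
  have hd2: "hd 2 y = Dg 2 ((t - y) / r) / r\<^sup>2" by (simp add: hd_def power2_eq_square)
  have hd0: "hd 0 y = Phi ((t - y) / r)" by (simp add: h0)
  have a4: "\<bar>c\<bar>^4 = c^4" by (simp add: power_even_abs)
  show ?thesis
    using T1 T2 unfolding s4 fact4 hd2 hd0
    by (simp add: a4 power2_eq_square power3_eq_cube power4_eq_xxxx field_simps abs_le_iff)
qed

lemma alg1: "(0 * a - inverse a / 2 * 1 * w) / b = - (w / a) / (2 * (b::real))"
  by (simp add: field_simps)

lemma z_deriv:
  assumes "0 < d + x"
  shows "((\<lambda>x. w / sqrt (d + x)) has_real_derivative (- (w / sqrt (d + x)) / (2 * (d + x)))) (at x)"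
proof -
  have l: "DERIV (\<lambda>x. d + x) x :> 1" using DERIV_add[OF DERIV_const[of d] DERIV_ident] by simp
  have E: "DERIV (\<lambda>x. sqrt (d + x)) x :> inverse (sqrt (d + x)) / 2 * 1"
    by (rule DERIV_chain2[OF DERIV_real_sqrt[OF assms] l])
  have D: "DERIV (\<lambda>y. w / sqrt (d + y)) x :> (0 * sqrt (d + x) - inverse (sqrt (d + x)) / 2 * 1 * w) / (sqrt (d + x) ^ Suc (Suc 0))"
    by (rule DERIV_quotient[OF DERIV_const E]) (use assms in simp)
  have eq: "sqrt (d + x) ^ Suc (Suc 0) = d + x" using assms real_sqrt_pow2[of "d + x"] by (simp add: numeral_2_eq_2)
  have eq2: "(0 * sqrt (d + x) - inverse (sqrt (d + x)) / 2 * 1 * w) / (d + x) = - (w / sqrt (d + x)) / (2 * (d + x))"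
    by (rule alg1)
  show ?thesis using D unfolding eq eq2 .
qed

lemma taylor_s:
  assumes dl: "dl > 0" and s: "s \<ge> 0"
  shows "\<bar>Phi (w / sqrt (dl\<^sup>2 + (s + c\<^sup>2))) - Phi (w / sqrt (dl\<^sup>2 + s))
          - c\<^sup>2 * Dg 2 (w / sqrt (dl\<^sup>2 + s)) / (2 * (dl\<^sup>2 + s))\<bar> \<le> Mc * c^4 / (8 * dl^4)"
proof -
  define z where "z x = w / sqrt (dl\<^sup>2 + x)" for x
  define hd where "hd (k::nat) x = (if k = 0 then Phi (z x) else if k = 1 then Dg 2 (z x) / (2 * (dl\<^sup>2 + x))
     else Dg 4 (z x) / (4 * (dl\<^sup>2 + x)\<^sup>2))" for k x
  have zd: "DERIV z x :> - z x / (2 * (dl\<^sup>2 + x))" if "x \<ge> s" for x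
  proof -
    have "0 < dl\<^sup>2" using dl by simp
    then have "0 < dl\<^sup>2 + x" using that s by linarith
    then show ?thesis unfolding z_def by (rule z_deriv)
  qed
  have der: "DERIV (hd m) x :> hd (Suc m) x" if m2: "m < 2" and xs: "x \<ge> s" for m x
  proof -
    have "0 < dl\<^sup>2" using dl by simp
    then have pos: "0 < dl\<^sup>2 + x" using xs s by linarith
    consider "m = 0" | "m = 1" using m2 by fastforce
    then show ?thesis
    proof cases
      case 1
      have "((\<lambda>x. Phi (z x)) has_real_derivative phi (z x) * (- z x / (2 * (dl\<^sup>2 + x)))) (at x)"
        by (rule DERIV_chain2[OF Phi_deriv zd[OF xs]])
      then show ?thesis using 1 unfolding hd_def by (simp add: Dg_def[abs_def] mult.commute)
    next
      case 2
      have d1: "((\<lambda>x. Dg 2 (z x)) has_real_derivative Dg 3 (z x) * (- z x / (2 * (dl\<^sup>2 + x)))) (at x)"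
      proof -
        have "(Dg 2 has_real_derivative Dg 3 (z x)) (at (z x))" using Dg_deriv[of 2] by simp
        then show ?thesis by (rule DERIV_chain2[OF _ zd[OF xs]])
      qed
      have q: "((\<lambda>x. 2 * (dl\<^sup>2 + x)) has_real_derivative 2) (at x)"
        by (auto intro!: derivative_eq_intros)
      have dq: "((\<lambda>x. Dg 2 (z x) / (2 * (dl\<^sup>2 + x))) has_real_derivative
             (Dg 3 (z x) * (- z x / (2 * (dl\<^sup>2 + x))) * (2 * (dl\<^sup>2 + x)) - 2 * Dg 2 (z x)) / (2 * (dl\<^sup>2 + x)) ^ Suc (Suc 0)) (at x)"
        by (rule DERIV_quotient[OF d1 q]) (use pos in simp)
      have "(Dg 3 (z x) * (- z x / (2 * (dl\<^sup>2 + x))) * (2 * (dl\<^sup>2 + x)) - 2 * Dg 2 (z x)) / (2 * (dl\<^sup>2 + x)) ^ Suc (Suc 0)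
          = Dg 4 (z x) / (4 * (dl\<^sup>2 + x)\<^sup>2)"
      proof -
        have e1: "(- z x / (2 * (dl\<^sup>2 + x))) * (2 * (dl\<^sup>2 + x)) = - z x" using pos by simp
        have e2: "(2 * (dl\<^sup>2 + x)) ^ Suc (Suc 0) = 4 * (dl\<^sup>2 + x)\<^sup>2" by (simp add: power2_eq_square algebra_simps)
        have e3: "Dg 3 (z x) * (- z x) - 2 * Dg 2 (z x) = Dg 4 (z x)"
          by (simp add: Dg_def power2_eq_square power3_eq_cube algebra_simps)
        show ?thesis unfolding e2 mult.assoc e1 using e3 by (simp add: mult.assoc)
      qed
      with dq have "((\<lambda>x. Dg 2 (z x) / (2 * (dl\<^sup>2 + x))) has_real_derivative Dg 4 (z x) / (4 * (dl\<^sup>2 + x)\<^sup>2)) (at x)"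
        by simp
      then show ?thesis using 2 unfolding hd_def by simp
    qed
  qed
  have bd: "\<bar>hd 2 x\<bar> \<le> Mc / (4 * dl^4)" if "x \<ge> s" for x
  proof -
    have "0 < dl\<^sup>2" using dl by simp
    then have pos: "0 < dl\<^sup>2 + x" using that s by linarith
    have "(dl\<^sup>2)\<^sup>2 \<le> (dl\<^sup>2 + x)\<^sup>2" using that s dl by (intro power_mono) auto
    then have "dl^4 \<le> (dl\<^sup>2 + x)\<^sup>2" by (simp add: power_mult[symmetric])
    moreover have "\<bar>hd 2 x\<bar> = \<bar>Dg 4 (z x)\<bar> / (4 * (dl\<^sup>2 + x)\<^sup>2)"
      using that by (simp add: hd_def abs_mult)
    moreover have "\<bar>Dg 4 (z x)\<bar> / (4 * (dl\<^sup>2 + x)\<^sup>2) \<le> Mc / (4 * (dl\<^sup>2 + x)\<^sup>2)"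
      by (intro divide_right_mono Dg4_bound) simp
    moreover have "Mc / (4 * (dl\<^sup>2 + x)\<^sup>2) \<le> Mc / (4 * dl^4)"
      using Mc_pos dl pos by (intro divide_left_mono mult_left_mono calculation(1)) auto
    ultimately show ?thesis by linarith
  qed
  have T: "\<bar>Phi (z (s + c\<^sup>2)) - (\<Sum>m<2. hd m s / fact m * ((s + c\<^sup>2) - s)^m)\<bar>
      \<le> Mc / (4 * dl^4) / fact 2 * \<bar>(s + c\<^sup>2) - s\<bar>^2"
  proof (rule taylor_bound[where diff=hd and f="\<lambda>x. Phi (z x)"])
    show "hd 0 = (\<lambda>x. Phi (z x))" by (simp add: hd_def[abs_def])
    show "DERIV (hd m) t :> hd (Suc m) t" if "m < 2" "min s (s + c\<^sup>2) \<le> t" "t \<le> max s (s + c\<^sup>2)" for m t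
      using that by (intro der) auto
    show "\<bar>hd 2 t\<bar> \<le> Mc / (4 * dl ^ 4)" if "min s (s + c\<^sup>2) \<le> t" "t \<le> max s (s + c\<^sup>2)" for t
      using that by (intro bd) auto
  qed simp
  have s2: "(\<Sum>m<2. g m) = g 0 + g 1" for g :: "nat \<Rightarrow> real"
    by (simp add: eval_nat_numeral)
  have h0: "hd 0 s = Phi (w / sqrt (dl\<^sup>2 + s))" by (simp add: hd_def z_def)
  have h1: "hd 1 s = Dg 2 (w / sqrt (dl\<^sup>2 + s)) / (2 * (dl\<^sup>2 + s))" by (simp add: hd_def z_def)
  have zz: "z (s + c\<^sup>2) = w / sqrt (dl\<^sup>2 + (s + c\<^sup>2))" by (simp add: z_def)
  have f2: "fact 2 = (2::real)" by (simp add: eval_nat_numeral)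
  have cc: "\<bar>s + c\<^sup>2 - s\<bar> ^ 2 = c^4" by (simp add: power_mult[symmetric])
  have e1: "hd 0 s / fact 0 * (s + c\<^sup>2 - s) ^ 0 + hd 1 s / fact 1 * (s + c\<^sup>2 - s) ^ 1
      = Phi (w / sqrt (dl\<^sup>2 + s)) + c\<^sup>2 * Dg 2 (w / sqrt (dl\<^sup>2 + s)) / (2 * (dl\<^sup>2 + s))"
    unfolding h0 h1 by simp
  have e2: "Mc / (4 * dl ^ 4) / fact 2 * \<bar>s + c\<^sup>2 - s\<bar> ^ 2 = Mc * c^4 / (8 * dl^4)"
    unfolding f2 cc by simp
  show ?thesis using T unfolding s2 e1 e2 zz by (simp add: algebra_simps)
qed

definition U :: "real \<Rightarrow> real \<Rightarrow> real \<Rightarrow> real \<Rightarrow> real" where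
  "U dl t s y = Phi ((t - y) / sqrt (dl\<^sup>2 + s))"

lemma lind_step:
  assumes dl: "dl > 0" and s: "s \<ge> 0"
  shows "\<bar>(U dl t s (y + c) + U dl t s (y - c)) / 2 - U dl t (s + c\<^sup>2) y\<bar> \<le> Mc * c^4 / (6 * dl^4)"
proof -
  define r where "r = sqrt (dl\<^sup>2 + s)"
  have p: "0 < dl\<^sup>2 + s" using dl s by (simp add: add_pos_nonneg)
  have r: "r > 0" using p by (simp add: r_def)
  have r2: "r\<^sup>2 = dl\<^sup>2 + s" using p by (simp add: r_def)
  have r4: "dl^4 \<le> r^4"
  proof -
    have "(dl\<^sup>2)\<^sup>2 \<le> (r\<^sup>2)\<^sup>2" unfolding r2 using s by (intro power_mono) auto
    then show ?thesis by (simp add: power_mult[symmetric])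
  qed
  have X: "\<bar>(Phi ((t - (y + c)) / r) + Phi ((t - (y - c)) / r)) / 2 - Phi ((t - y) / r)
          - c\<^sup>2 / (2 * r\<^sup>2) * Dg 2 ((t - y) / r)\<bar> \<le> Mc * c^4 / (24 * r^4)"
    by (rule taylor_x[OF r])
  have X2: "Mc * c^4 / (24 * r^4) \<le> Mc * c^4 / (24 * dl^4)"
    using Mc_pos r4 dl by (intro divide_left_mono mult_left_mono mult_nonneg_nonneg) (auto simp: zero_le_even_power intro!: mult_pos_pos)
  have S: "\<bar>Phi ((t - y) / sqrt (dl\<^sup>2 + (s + c\<^sup>2))) - Phi ((t - y) / sqrt (dl\<^sup>2 + s))
          - c\<^sup>2 * Dg 2 ((t - y) / sqrt (dl\<^sup>2 + s)) / (2 * (dl\<^sup>2 + s))\<bar> \<le> Mc * c^4 / (8 * dl^4)"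
    by (rule taylor_s[OF dl s])
  have e: "c\<^sup>2 / (2 * r\<^sup>2) * Dg 2 ((t - y) / r) = c\<^sup>2 * Dg 2 ((t - y) / sqrt (dl\<^sup>2 + s)) / (2 * (dl\<^sup>2 + s))"
    unfolding r2 by (simp add: r_def)
  have tot: "Mc * c^4 / (24 * dl^4) + Mc * c^4 / (8 * dl^4) = Mc * c^4 / (6 * dl^4)"
    by (simp add: field_simps)
  have "\<bar>(U dl t s (y + c) + U dl t s (y - c)) / 2 - U dl t (s + c\<^sup>2) y\<bar> \<le> Mc * c^4 / (24 * dl^4) + Mc * c^4 / (8 * dl^4)"
    using X X2 S unfolding U_def e r_def[symmetric] by (simp add: abs_le_iff)
  then show ?thesis unfolding tot .
qed

definition SV :: "nat \<Rightarrow> (nat \<Rightarrow> real) set" where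
  "SV N = PiE {..<N} (\<lambda>_. {-1, 1})"

definition avg :: "nat \<Rightarrow> ((nat \<Rightarrow> real) \<Rightarrow> real) \<Rightarrow> real" where
  "avg N f = (\<Sum>e\<in>SV N. f e) / 2 ^ N"

lemma finite_SV[simp]: "finite (SV N)"
  unfolding SV_def by (intro finite_PiE) auto

lemma card_SV: "card (SV N) = 2 ^ N"
  unfolding SV_def by (simp add: card_PiE numeral_2_eq_2)

lemma sum_SV_Suc: "(\<Sum>e\<in>SV (Suc N). f e) = (\<Sum>e\<in>SV N. f (e(N := 1)) + f (e(N := -1)))"
proof -
  have "SV (Suc N) = (\<lambda>(y, g). g(N := y)) ` ({-1, 1} \<times> SV N)"
    unfolding SV_def lessThan_Suc by (rule PiE_insert_eq)
  moreover have inj: "inj_on (\<lambda>(y, g). g(N := y)) ({-1, 1} \<times> SV N)"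
    unfolding SV_def by (rule inj_combinator) simp
  ultimately have "(\<Sum>e\<in>SV (Suc N). f e) = (\<Sum>p\<in>{-1, 1} \<times> SV N. (f \<circ> (\<lambda>(y, g). g(N := y))) p)"
    using sum.reindex[OF inj, of f] by simp
  also have "\<dots> = (\<Sum>p\<in>{-1, 1} \<times> SV N. f ((snd p)(N := fst p)))"
    by (simp add: case_prod_beta o_def)
  also have "\<dots> = (\<Sum>y\<in>{-1, 1::real}. \<Sum>g\<in>SV N. f (g(N := y)))"
    by (subst sum.cartesian_product) (simp add: case_prod_beta)
  also have "\<dots> = (\<Sum>g\<in>SV N. f (g(N := 1)) + f (g(N := -1)))"
    by (simp add: sum.distrib add.commute)
  finally show ?thesis .
qed

lemma avg_Suc: "avg (Suc N) f = avg N (\<lambda>e. (f (e(N := 1)) + f (e(N := -1))) / 2)"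
  unfolding avg_def sum_SV_Suc by (simp add: sum_divide_distrib[symmetric] field_simps)

lemma avg_diff_bound:
  assumes "\<And>e. e \<in> SV N \<Longrightarrow> \<bar>f e - g e\<bar> \<le> B"
  shows "\<bar>avg N f - avg N g\<bar> \<le> B"
proof -
  have "\<bar>(\<Sum>e\<in>SV N. f e) - (\<Sum>e\<in>SV N. g e)\<bar> = \<bar>\<Sum>e\<in>SV N. f e - g e\<bar>"
    by (simp add: sum_subtractf)
  also have "\<dots> \<le> (\<Sum>e\<in>SV N. \<bar>f e - g e\<bar>)" by (rule sum_abs)
  also have "\<dots> \<le> (\<Sum>e\<in>SV N. B)" using assms by (intro sum_mono) auto
  also have "\<dots> = 2 ^ N * B" by (simp add: card_SV)
  finally have "\<bar>(\<Sum>e\<in>SV N. f e) - (\<Sum>e\<in>SV N. g e)\<bar> \<le> 2 ^ N * B" .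
  then show ?thesis unfolding avg_def
    by (simp add: diff_divide_distrib[symmetric] abs_divide field_simps)
qed

lemma avg_const: "avg N (\<lambda>_. a) = a"
  unfolding avg_def by (simp add: card_SV)

lemma lindeberg:
  assumes dl: "dl > 0"
  shows "s \<ge> 0 \<Longrightarrow> \<bar>avg N (\<lambda>e. U dl t s (\<Sum>j<N. c j * e j)) - U dl t (s + (\<Sum>j<N. (c j)\<^sup>2)) 0\<bar>
           \<le> Mc / (6 * dl^4) * (\<Sum>j<N. (c j)^4)"
proof (induction N arbitrary: s)
  case 0
  then show ?case by (simp add: avg_const)
next
  case (Suc N)
  define S where "S e = (\<Sum>j<N. c j * e j)" for e :: "nat \<Rightarrow> real"
  have SU: "(\<Sum>j<N. c j * (e(N := b)) j) = S e" for e b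
    unfolding S_def by (intro sum.cong) auto
  have A: "avg (Suc N) (\<lambda>e. U dl t s (\<Sum>j<Suc N. c j * e j))
        = avg N (\<lambda>e. (U dl t s (S e + c N) + U dl t s (S e - c N)) / 2)"
    unfolding avg_Suc S_def using SU unfolding S_def by simp
  have B: "\<bar>avg N (\<lambda>e. (U dl t s (S e + c N) + U dl t s (S e - c N)) / 2)
           - avg N (\<lambda>e. U dl t (s + (c N)\<^sup>2) (S e))\<bar> \<le> Mc * (c N)^4 / (6 * dl^4)"
    by (rule avg_diff_bound) (rule lind_step[OF dl Suc.prems])
  have C: "\<bar>avg N (\<lambda>e. U dl t (s + (c N)\<^sup>2) (S e)) - U dl t (s + (c N)\<^sup>2 + (\<Sum>j<N. (c j)\<^sup>2)) 0\<bar>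
           \<le> Mc / (6 * dl^4) * (\<Sum>j<N. (c j)^4)"
    unfolding S_def using Suc.IH[of "s + (c N)\<^sup>2"] Suc.prems by simp
  have D: "s + (c N)\<^sup>2 + (\<Sum>j<N. (c j)\<^sup>2) = s + (\<Sum>j<Suc N. (c j)\<^sup>2)" by simp
  have E: "Mc * (c N)^4 / (6 * dl^4) + Mc / (6 * dl^4) * (\<Sum>j<N. (c j)^4) = Mc / (6 * dl^4) * (\<Sum>j<Suc N. (c j)^4)"
    using dl by (simp add: field_simps)
  show ?case using B C unfolding A D E[symmetric] by linarith
qed

lemma avg_add: "avg N (\<lambda>e. f e + g e) = avg N f + avg N g"
  unfolding avg_def by (simp add: sum.distrib add_divide_distrib)

lemma avg_cmult: "avg N (\<lambda>e. a * f e) = a * avg N f"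
  unfolding avg_def by (simp add: sum_distrib_left[symmetric])

lemma avg_mono: "(\<And>e. e \<in> SV N \<Longrightarrow> f e \<le> g e) \<Longrightarrow> avg N f \<le> avg N g"
  unfolding avg_def by (intro divide_right_mono sum_mono) auto

lemma avg_cong: "(\<And>e. e \<in> SV N \<Longrightarrow> f e = g e) \<Longrightarrow> avg N f = avg N g"
  unfolding avg_def by (metis sum.cong)

lemma sum_upd_Suc: "(\<Sum>l<Suc N. a l * (e(N := b)) l) = (\<Sum>l<N. a l * e l) + a N * b"
proof -
  have "(\<Sum>j<N. a j * (e(N := b)) j) = (\<Sum>j<N. a j * e j)" by (intro sum.cong) auto
  then show ?thesis by simp
qed

lemma moment2: "avg N (\<lambda>e. (\<Sum>l<N. a l * e l)\<^sup>2) = (\<Sum>l<N. (a l)\<^sup>2)"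
proof (induction N)
  case 0 then show ?case by (simp add: avg_const)
next
  case (Suc N)
  have SU: "(\<Sum>j<N. a j * (e(N := b)) j) = (\<Sum>j<N. a j * e j)" for e b
    by (intro sum.cong) auto
  have "avg (Suc N) (\<lambda>e. (\<Sum>l<Suc N. a l * e l)\<^sup>2)
      = avg N (\<lambda>e. (\<Sum>l<N. a l * e l)\<^sup>2 + (a N)\<^sup>2)"
    unfolding avg_Suc sum_upd_Suc by (intro avg_cong) (simp add: power2_eq_square algebra_simps)
  also have "\<dots> = (\<Sum>l<Suc N. (a l)\<^sup>2)" by (simp add: avg_add avg_const Suc.IH)
  finally show ?case .
qed

lemma moment4: "avg N (\<lambda>e. (\<Sum>l<N. a l * e l)^4) \<le> 3 * (\<Sum>l<N. (a l)\<^sup>2)\<^sup>2"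
proof (induction N)
  case 0 then show ?case by (simp add: avg_const)
next
  case (Suc N)
  have SU: "(\<Sum>j<N. a j * (e(N := b)) j) = (\<Sum>j<N. a j * e j)" for e b
    by (intro sum.cong) auto
  define A where "A = (\<Sum>l<N. (a l)\<^sup>2)"
  have A0: "0 \<le> A" unfolding A_def by (intro sum_nonneg) auto
  have e: "((x + y)^4 + (x - y)^4) / 2 = x^4 + 6 * y\<^sup>2 * x\<^sup>2 + y^4" for x y :: real
    by (simp add: power2_eq_square power4_eq_xxxx algebra_simps)
  have "avg (Suc N) (\<lambda>e. (\<Sum>l<Suc N. a l * e l)^4)
      = avg N (\<lambda>e. (\<Sum>l<N. a l * e l)^4 + 6 * (a N)\<^sup>2 * (\<Sum>l<N. a l * e l)\<^sup>2 + (a N)^4)"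
    unfolding avg_Suc sum_upd_Suc
  proof (intro avg_cong)
    fix e
    show "(((\<Sum>l<N. a l * e l) + a N * 1) ^ 4 + ((\<Sum>l<N. a l * e l) + a N * - 1) ^ 4) / 2 =
         (\<Sum>l<N. a l * e l) ^ 4 + 6 * (a N)\<^sup>2 * (\<Sum>l<N. a l * e l)\<^sup>2 + a N ^ 4"
      using e[of "\<Sum>l<N. a l * e l" "a N"] by simp
  qed
  also have "\<dots> = avg N (\<lambda>e. (\<Sum>l<N. a l * e l)^4) + 6 * (a N)\<^sup>2 * A + (a N)^4"
    by (simp add: avg_add avg_const avg_cmult moment2 A_def)
  also have "\<dots> \<le> 3 * A\<^sup>2 + 6 * (a N)\<^sup>2 * A + (a N)^4"
    using Suc.IH unfolding A_def by simp
  also have "\<dots> \<le> 3 * (\<Sum>l<Suc N. (a l)\<^sup>2)\<^sup>2"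
  proof -
    have s1: "(\<Sum>l<Suc N. (a l)\<^sup>2) = A + (a N)\<^sup>2" by (simp add: A_def)
    have s2: "3 * (A + (a N)\<^sup>2)\<^sup>2 = 3 * A\<^sup>2 + 6 * (a N)\<^sup>2 * A + (a N)^4 + 2 * (a N)^4"
      by (simp add: power2_eq_square power4_eq_xxxx algebra_simps)
    have "0 \<le> (a N)^4" by simp
    then show ?thesis unfolding s1 s2 by linarith
  qed
  finally show ?case .
qed

lemma had_sq: "(hadamard m i j)\<^sup>2 = 1"
  by (induction m arbitrary: i j) (auto simp: Let_def)

lemma sum_split_add: "(\<Sum>j<n + (k::nat). f j) = (\<Sum>j<n. f j) + (\<Sum>j<k. f (n + j))"
  by (induction k) (auto simp: add.assoc)

lemma had_Suc_lo: "j < 2^m \<Longrightarrow> l < 2 * 2^m \<Longrightarrow> hadamard (Suc m) j l = hadamard m j (l mod 2^m)"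
  by (auto simp: Let_def le_mod_geq not_less)

lemma had_Suc_hi: "j < 2^m \<Longrightarrow> l < 2 * 2^m \<Longrightarrow>
   hadamard (Suc m) (2^m + j) l = (if l < 2^m then 1 else -1) * hadamard m j (l mod 2^m)"
  by (auto simp: Let_def le_mod_geq not_less)

lemma had_orth: "l < 2^m \<Longrightarrow> l' < 2^m \<Longrightarrow>
  (\<Sum>j<2^m. hadamard m j l * hadamard m j l') = (if l = l' then 2^m else 0)"
proof (induction m arbitrary: l l')
  case 0 then show ?case by simp
next
  case (Suc m)
  define n :: nat where "n = 2^m"
  have n2: "2^Suc m = n + n" by (simp add: n_def)
  define s where "s x = (if x < n then 1 else -1::real)" for x
  have lo: "hadamard (Suc m) j x = hadamard m j (x mod n)" if "j < n" "x < n + n" for j x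
    using had_Suc_lo[of j m x] that by (simp add: n_def)
  have hi: "hadamard (Suc m) (n + j) x = s x * hadamard m j (x mod n)" if "j < n" "x < n + n" for j x
    using had_Suc_hi[of j m x] that by (simp add: n_def s_def)
  have l: "l < n + n" "l' < n + n" using Suc.prems n2 by auto
  have "(\<Sum>j<2^Suc m. hadamard (Suc m) j l * hadamard (Suc m) j l')
      = (\<Sum>j<n. hadamard m j (l mod n) * hadamard m j (l' mod n)) * (1 + s l * s l')"
  proof -
    have A: "(\<Sum>j<n. hadamard (Suc m) j l * hadamard (Suc m) j l') = (\<Sum>j<n. hadamard m j (l mod n) * hadamard m j (l' mod n))"
      by (intro sum.cong refl) (simp only: lo l lessThan_iff)
    have B: "(\<Sum>j<n. hadamard (Suc m) (n + j) l * hadamard (Suc m) (n + j) l') = (\<Sum>j<n. hadamard m j (l mod n) * hadamard m j (l' mod n)) * (s l * s l')"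
      unfolding sum_distrib_right by (intro sum.cong refl) (simp only: hi l lessThan_iff mult_ac)
    show ?thesis unfolding n2 sum_split_add A B by (simp add: algebra_simps)
  qed
  also have "(\<Sum>j<n. hadamard m j (l mod n) * hadamard m j (l' mod n)) = (if l mod n = l' mod n then real n else 0)"
    using Suc.IH[of "l mod n" "l' mod n"] by (simp add: n_def)
  also have "(if l mod n = l' mod n then real n else 0) * (1 + s l * s l') = (if l = l' then 2^Suc m else 0)"
  proof (cases "l = l'")
    case True then show ?thesis by (simp add: s_def n2 n_def)
  next
    case False
    show ?thesis
    proof (cases "l mod n = l' mod n")
      case True
      have "s l * s l' = -1"
      proof -
        have "(l < n) \<noteq> (l' < n)"
        proof
          assume "(l < n) = (l' < n)"
          then show False using True False l by (cases "l < n") (auto simp: le_mod_geq not_less)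
        qed
        then show ?thesis by (auto simp: s_def)
      qed
      then show ?thesis using False by simp
    next
      case F2: False
      then show ?thesis using False by simp
    qed
  qed
  finally show ?case .
qed

definition ND :: "real \<Rightarrow> real measure" where "ND r = density lborel (normal_density 0 r)"

lemma ND_prob: "r > 0 \<Longrightarrow> prob_space (ND r)"
  unfolding ND_def by (rule prob_space_normal_density)

lemma sets_ND[simp, measurable_cong]: "sets (ND r) = sets borel"
  unfolding ND_def by simp

lemma nd_scale: "r > 0 \<Longrightarrow> r * normal_density 0 r (r * w) = std_normal_density w"
  unfolding normal_density_def
  by (simp add: real_sqrt_mult power_mult_distrib field_simps)

lemma ND_le: assumes r: "r > 0" shows "measure (ND r) {..x} = Phi (x / r)"
proof -
  have "emeasure (ND r) {..x} = (\<integral>\<^sup>+ y. ennreal (normal_density 0 r y) * indicator {..x} y \<partial>lborel)"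
    unfolding ND_def by (subst emeasure_density) auto
  also have "\<dots> = ennreal \<bar>r\<bar> * (\<integral>\<^sup>+ w. ennreal (normal_density 0 r (0 + r * w)) * indicator {..x} (0 + r * w) \<partial>lborel)"
    by (rule nn_integral_real_affine) (use r in auto)
  also have "\<dots> = (\<integral>\<^sup>+ w. ennreal (std_normal_density w) * indicator {..x / r} w \<partial>lborel)"
    using r
    by (subst nn_integral_cmult[symmetric]) (auto intro!: nn_integral_cong simp: nd_scale[symmetric] ennreal_mult'[symmetric] indicator_def field_simps mult.assoc)
  also have "\<dots> = emeasure SN {..x / r}"
    unfolding SN_def by (subst emeasure_density) auto
  finally show ?thesis
    unfolding Phi_def measure_def by simp
qed

lemma gauss_law_ND: "v > 0 \<Longrightarrow> gauss_law v = ND (sqrt v)"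
  unfolding gauss_law_def ND_def by simp

lemma Phi_cont: "continuous_on A Phi"
  using Phi_deriv by (meson DERIV_isCont continuous_at_imp_continuous_on)

lemma Phi_meas[measurable]: "Phi \<in> borel_measurable borel"
  by (intro borel_measurable_continuous_onI Phi_cont)

lemma Phi_nonneg: "0 \<le> Phi x" unfolding Phi_def by simp

lemma conv_ND:
  assumes sg: "sg > 0" and dl: "dl > 0"
  shows "(\<integral>\<^sup>+ z. ennreal (Phi ((t - z) / sg)) \<partial>ND dl) = ennreal (Phi (t / sqrt (sg\<^sup>2 + dl\<^sup>2)))"
proof -
  interpret S: prob_space "ND sg" by (rule ND_prob[OF sg])
  have rho: "sqrt (sg\<^sup>2 + dl\<^sup>2) > 0" using sg by (simp add: add_pos_nonneg)
  have inner: "ennreal (Phi ((t - z) / sg)) = (\<integral>\<^sup>+ x. ennreal (normal_density 0 sg x * indicator {..t - z} x) \<partial>lborel)" for z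
  proof -
    have "ennreal (Phi ((t - z) / sg)) = emeasure (ND sg) {..t - z}"
      by (simp add: ND_le[OF sg] S.emeasure_eq_measure)
    also have "\<dots> = (\<integral>\<^sup>+ x. ennreal (normal_density 0 sg x) * indicator {..t - z} x \<partial>lborel)"
      unfolding ND_def by (subst emeasure_density) auto
    finally show ?thesis by (auto intro!: nn_integral_cong simp: indicator_def)
  qed
  have "(\<integral>\<^sup>+ z. ennreal (Phi ((t - z) / sg)) \<partial>ND dl)
      = (\<integral>\<^sup>+ z. ennreal (normal_density 0 dl z) * ennreal (Phi ((t - z) / sg)) \<partial>lborel)"
    unfolding ND_def by (subst nn_integral_density) auto
  also have "\<dots> = (\<integral>\<^sup>+ z. (\<integral>\<^sup>+ x. ennreal (normal_density 0 dl z * (normal_density 0 sg x * indicator {..t - z} x)) \<partial>lborel) \<partial>lborel)"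
    unfolding inner
    by (intro nn_integral_cong, subst nn_integral_cmult[symmetric]) (auto simp: ennreal_mult'' normal_density_nonneg)
  also have "\<dots> = (\<integral>\<^sup>+ z. (\<integral>\<^sup>+ w. ennreal (normal_density 0 dl z * (normal_density 0 sg (w - z) * indicator {..t} w)) \<partial>lborel) \<partial>lborel)"
  proof (rule nn_integral_cong)
    fix z :: real assume "z \<in> space lborel"
    have "(\<integral>\<^sup>+ x. ennreal (normal_density 0 dl z * (normal_density 0 sg x * indicator {..t - z} x)) \<partial>lborel)
        = ennreal \<bar>1\<bar> * (\<integral>\<^sup>+ w. ennreal (normal_density 0 dl z * (normal_density 0 sg (- z + 1 * w) * indicator {..t - z} (- z + 1 * w))) \<partial>lborel)"
      by (rule nn_integral_real_affine) auto
    also have "\<dots> = (\<integral>\<^sup>+ w. ennreal (normal_density 0 dl z * (normal_density 0 sg (w - z) * indicator {..t} w)) \<partial>lborel)"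
      by (auto intro!: nn_integral_cong simp: indicator_def)
    finally show "(\<integral>\<^sup>+ x. ennreal (normal_density 0 dl z * (normal_density 0 sg x * indicator {..t - z} x)) \<partial>lborel)
        = (\<integral>\<^sup>+ w. ennreal (normal_density 0 dl z * (normal_density 0 sg (w - z) * indicator {..t} w)) \<partial>lborel)" .
  qed
  also have "\<dots> = (\<integral>\<^sup>+ w. (\<integral>\<^sup>+ z. ennreal (normal_density 0 dl z * (normal_density 0 sg (w - z) * indicator {..t} w)) \<partial>lborel) \<partial>lborel)"
    by (rule lborel_pair.Fubini'[where f="\<lambda>w z. ennreal (normal_density 0 dl z * (normal_density 0 sg (w - z) * indicator {..t} w))"]) measurable
  also have "\<dots> = (\<integral>\<^sup>+ w. indicator {..t} w * (\<integral>\<^sup>+ z. ennreal (normal_density 0 sg (w - z) * normal_density 0 dl z) \<partial>lborel) \<partial>lborel)"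
    by (intro nn_integral_cong, subst nn_integral_cmult[symmetric])
       (auto intro!: nn_integral_cong simp: indicator_def mult_ac)
  also have "\<dots> = (\<integral>\<^sup>+ w. indicator {..t} w * ennreal (normal_density 0 (sqrt (sg\<^sup>2 + dl\<^sup>2)) w) \<partial>lborel)"
    using conv_normal_density_zero_mean[OF sg dl] by (simp add: fun_eq_iff)
  also have "\<dots> = emeasure (ND (sqrt (sg\<^sup>2 + dl\<^sup>2))) {..t}"
    unfolding ND_def by (subst emeasure_density) (auto simp: mult.commute)
  also have "\<dots> = ennreal (Phi (t / sqrt (sg\<^sup>2 + dl\<^sup>2)))"
  proof -
    interpret R: prob_space "ND (sqrt (sg\<^sup>2 + dl\<^sup>2))" by (rule ND_prob[OF rho])
    show ?thesis using ND_le[OF rho] by (simp add: R.emeasure_eq_measure)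
  qed
  finally show ?thesis .
qed

lemma smoothing:
  fixes F G :: "real \<Rightarrow> real"
  assumes dl: "dl > 0" and a: "a \<ge> 0"
    and Fm: "mono F" and F01: "\<And>x. 0 \<le> F x \<and> F x \<le> 1"
    and Gc: "continuous_on UNIV G" and G01: "\<And>x. 0 \<le> G x \<and> G x \<le> 1"
    and Gl: "\<And>x y. \<bar>G x - G y\<bar> \<le> g * \<bar>x - y\<bar>"
    and hyp: "\<And>t. \<bar>(\<integral>z. F (t - z) \<partial>ND dl) - (\<integral>z. G (t - z) \<partial>ND dl)\<bar> \<le> E"
    and beta: "beta = measure (ND dl) {-a..a}"
  shows "(2 * beta - 1) * (SUP t. \<bar>F t - G t\<bar>) \<le> E + 2 * a * g * beta"
proof -
  interpret N: prob_space "ND dl" by (rule ND_prob[OF dl])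
  define eta where "eta = (SUP t. \<bar>F t - G t\<bar>)"
  have bdd: "bdd_above (range (\<lambda>t. \<bar>F t - G t\<bar>))"
    using F01 G01 by (intro bdd_aboveI[of _ 1]) (auto simp: abs_le_iff; smt (verit))
  have eta_ub: "\<bar>F t - G t\<bar> \<le> eta" for t unfolding eta_def by (rule cSUP_upper[OF _ bdd]) simp
  have Fmeas: "(\<lambda>z. F (t - z)) \<in> borel_measurable borel" for t
  proof -
    have "F \<in> borel_measurable borel" using Fm by (rule borel_measurable_mono)
    then show ?thesis by measurable
  qed
  have Gmeas: "(\<lambda>z. G (t - z)) \<in> borel_measurable borel" for t
  proof -
    have "G \<in> borel_measurable borel" using Gc by (rule borel_measurable_continuous_onI)
    then show ?thesis by measurable
  qed
  have Fint: "integrable (ND dl) (\<lambda>z. F (t - z))" for t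
    by (rule N.integrable_const_bound[where B=1]) (use F01 Fmeas in auto)
  have Gint: "integrable (ND dl) (\<lambda>z. G (t - z))" for t
    by (rule N.integrable_const_bound[where B=1]) (use G01 Gmeas in auto)
  have g0: "g \<ge> 0" using Gl[of 1 0] by (smt (verit) abs_ge_zero mult_cancel_left1)
  define I :: "real \<Rightarrow> real" where "I = indicator {-a..a}"
  have Iint: "integrable (ND dl) I" unfolding I_def by (rule integrable_real_indicator) (auto simp: N.emeasure_eq_measure)
  have intI: "(\<integral>z. I z \<partial>ND dl) = beta" unfolding I_def beta by simp
  have key: "beta * \<bar>F t0 - G t0\<bar> \<le> E + 2 * a * g * beta + (1 - beta) * eta" for t0
  proof -
    define D where "D = \<bar>F t0 - G t0\<bar>"
    obtain h where hint: "integrable (ND dl) h" and hE: "(\<integral>z. h z \<partial>ND dl) \<le> E"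
      and hlow: "\<And>z. (D - 2 * a * g) * I z - eta * (1 - I z) \<le> h z"
    proof (cases "G t0 \<le> F t0")
      case True
      let ?h = "\<lambda>z. F (t0 + a - z) - G (t0 + a - z)"
      show ?thesis
      proof
        show "integrable (ND dl) ?h" using Fint Gint by auto
        show "(\<integral>z. ?h z \<partial>ND dl) \<le> E"
          using hyp[of "t0 + a"] Fint Gint by (simp add: abs_le_iff)
        fix z
        show "(D - 2 * a * g) * I z - eta * (1 - I z) \<le> ?h z"
        proof (cases "z \<in> {-a..a}")
          case True
          have "F t0 \<le> F (t0 + a - z)" using True Fm by (auto intro: monoD)
          moreover have "G (t0 + a - z) \<le> G t0 + g * (2 * a)"
          proof -
            have "\<bar>G (t0 + a - z) - G t0\<bar> \<le> g * \<bar>a - z\<bar>" using Gl[of "t0 + a - z" t0] by simp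
            also have "\<dots> \<le> g * (2 * a)" using True g0 by (intro mult_left_mono) auto
            finally show ?thesis by simp
          qed
          ultimately show ?thesis using True \<open>G t0 \<le> F t0\<close> by (simp add: I_def D_def algebra_simps)
        next
          case False
          then show ?thesis using eta_ub[of "t0 + a - z"] by (simp add: I_def abs_le_iff)
        qed
      qed
    next
      case False
      let ?h = "\<lambda>z. G (t0 - a - z) - F (t0 - a - z)"
      show ?thesis
      proof
        show "integrable (ND dl) ?h" using Fint Gint by auto
        show "(\<integral>z. ?h z \<partial>ND dl) \<le> E"
          using hyp[of "t0 - a"] Fint Gint by (simp add: abs_le_iff)
        fix z
        show "(D - 2 * a * g) * I z - eta * (1 - I z) \<le> ?h z"
        proof (cases "z \<in> {-a..a}")
          case True
          have "F (t0 - a - z) \<le> F t0" using True Fm by (auto intro: monoD)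
          moreover have "G t0 - g * (2 * a) \<le> G (t0 - a - z)"
          proof -
            have "\<bar>G (t0 - a - z) - G t0\<bar> \<le> g * \<bar>- a - z\<bar>" using Gl[of "t0 - a - z" t0] by simp
            also have "\<dots> \<le> g * (2 * a)" using True g0 by (intro mult_left_mono) auto
            finally show ?thesis by (simp add: abs_le_iff)
          qed
          ultimately show ?thesis using True False by (simp add: I_def D_def algebra_simps)
        next
          case False
          then show ?thesis using eta_ub[of "t0 - a - z"] by (simp add: I_def abs_le_iff)
        qed
      qed
    qed
    have "(\<integral>z. (D - 2 * a * g) * I z - eta * (1 - I z) \<partial>ND dl) \<le> (\<integral>z. h z \<partial>ND dl)"
      by (rule integral_mono[OF _ hint hlow]) (use Iint in auto)
    moreover have "(\<integral>z. (D - 2 * a * g) * I z - eta * (1 - I z) \<partial>ND dl) = (D - 2 * a * g) * beta - eta * (1 - beta)"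
      using Iint intI by (simp add: N.prob_space)
    ultimately have "(D - 2 * a * g) * beta - eta * (1 - beta) \<le> E" using hE by linarith
    then show ?thesis by (simp add: D_def algebra_simps)
  qed
  have b0: "0 \<le> beta" unfolding beta by simp
  show ?thesis
  proof (cases "beta = 0")
    case True
    have "0 \<le> eta" using eta_ub[of 0] by linarith
    moreover have "E \<ge> 0" using hyp[of 0] by linarith
    ultimately show ?thesis using True by (simp add: eta_def[symmetric])
  next
    case False
    then have bp: "beta > 0" using b0 by simp
    have "eta \<le> (E + 2 * a * g * beta + (1 - beta) * eta) / beta"
      unfolding eta_def
    proof (rule cSUP_least)
      fix t
      show "\<bar>F t - G t\<bar> \<le> (E + 2 * a * g * beta + (1 - beta) * (SUP t. \<bar>F t - G t\<bar>)) / beta"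
        using key[of t] bp by (simp add: field_simps eta_def)
    qed simp
    then have "beta * eta \<le> E + 2 * a * g * beta + (1 - beta) * eta" using bp by (simp add: field_simps)
    then show ?thesis unfolding eta_def[symmetric] by (simp add: algebra_simps)
  qed
qed

definition q0 :: real where "q0 = 1 / sqrt (2 * pi)"

lemma phi_le_q0: "phi x \<le> q0"
  unfolding q0_def std_normal_density_def by (simp add: divide_right_mono)

lemma phi_lower: "q0 * (1 - x\<^sup>2 / 2) \<le> phi x"
proof -
  have "1 - x\<^sup>2/2 \<le> exp (- x\<^sup>2 / 2)" using exp_ge_add_one_self[of "- x\<^sup>2/2"] by simp
  then show ?thesis unfolding q0_def std_normal_density_def
    by (intro mult_left_mono) auto
qed

lemma Phi_mono: "x \<le> y \<Longrightarrow> Phi x \<le> Phi y"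
  by (rule DERIV_nonneg_imp_nondecreasing) (auto intro!: exI Phi_deriv)

lemma Phi_lip: "x \<le> y \<Longrightarrow> Phi y - Phi x \<le> q0 * (y - x)"
proof -
  assume xy: "x \<le> y"
  have "(\<lambda>z. q0 * z - Phi z) x \<le> (\<lambda>z. q0 * z - Phi z) y"
  proof (rule DERIV_nonneg_imp_nondecreasing[OF xy])
    fix z
    show "\<exists>w. ((\<lambda>z. q0 * z - Phi z) has_real_derivative w) (at z) \<and> 0 \<le> w"
      by (rule exI[of _ "q0 * 1 - phi z"]) (auto intro!: derivative_intros Phi_deriv simp: phi_le_q0)
  qed
  then show ?thesis by (simp add: algebra_simps)
qed

lemma Phi_lip_abs: "\<bar>Phi x - Phi y\<bar> \<le> q0 * \<bar>x - y\<bar>"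
  using Phi_lip[of x y] Phi_lip[of y x] Phi_mono[of x y] Phi_mono[of y x]
  by (cases "x \<le> y") (auto simp: abs_if algebra_simps)

lemma Phi_le1: "Phi x \<le> 1"
proof -
  interpret prob_space SN by (rule SN_prob)
  show ?thesis unfolding Phi_def by simp
qed

lemma Phi_interval: "lam \<ge> 0 \<Longrightarrow> q0 * (2 * lam - lam^3 / 3) \<le> Phi lam - Phi (- lam)"
proof -
  assume l: "lam \<ge> 0"
  have "(\<lambda>z. Phi z - q0 * (z - z^3/6)) (- lam) \<le> (\<lambda>z. Phi z - q0 * (z - z^3/6)) lam"
  proof (rule DERIV_nonneg_imp_nondecreasing[where f="\<lambda>z. Phi z - q0 * (z - z^3/6)"])
    show "- lam \<le> lam" using l by simp
    fix z
    show "\<exists>w. ((\<lambda>z. Phi z - q0 * (z - z^3/6)) has_real_derivative w) (at z) \<and> 0 \<le> w"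
    proof (rule exI[of _ "phi z - q0 * (1 - 3 * z\<^sup>2 / 6)"], intro conjI)
      show "((\<lambda>z. Phi z - q0 * (z - z^3/6)) has_real_derivative phi z - q0 * (1 - 3 * z\<^sup>2 / 6)) (at z)"
        by (auto intro!: derivative_eq_intros Phi_deriv simp: power2_eq_square)
      show "0 \<le> phi z - q0 * (1 - 3 * z\<^sup>2 / 6)" using phi_lower[of z] by simp
    qed
  qed
  then show ?thesis by (simp add: algebra_simps)
qed

lemma ND_Icc_lower:
  assumes dl: "dl > 0" and l: "lam \<ge> 0"
  shows "Phi lam - Phi (- lam) \<le> measure (ND dl) {- (lam * dl)..lam * dl}"
proof -
  interpret N: prob_space "ND dl" by (rule ND_prob[OF dl])
  have "0 \<le> lam * dl" using l dl by simp
  then have "{..lam * dl} = {..< - (lam * dl)} \<union> {- (lam * dl)..lam * dl}" by auto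
  then have "measure (ND dl) {..lam * dl} = measure (ND dl) {..< - (lam * dl)} + measure (ND dl) {- (lam * dl)..lam * dl}"
    by (simp, intro N.finite_measure_Union) auto
  moreover have "measure (ND dl) {..< - (lam * dl)} \<le> measure (ND dl) {..- (lam * dl)}"
    by (rule N.finite_measure_mono) auto
  moreover have "measure (ND dl) {..lam * dl} = Phi lam" "measure (ND dl) {..- (lam * dl)} = Phi (- lam)"
    using dl by (simp_all add: ND_le)
  ultimately show ?thesis by linarith
qed

definition wv :: "nat \<Rightarrow> (nat \<Rightarrow> real) \<Rightarrow> (nat \<Rightarrow> real) \<Rightarrow> nat \<Rightarrow> real" where
  "wv m u e2 j = (\<Sum>l<2^m. hadamard m j l * e2 l * u l)"

lemma SV_val: "e \<in> SV N \<Longrightarrow> l < N \<Longrightarrow> e l = -1 \<or> e l = 1"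
  unfolding SV_def by (auto simp: PiE_iff)

lemma SV_sq: "e \<in> SV N \<Longrightarrow> l < N \<Longrightarrow> (e l)\<^sup>2 = 1"
  using SV_val by fastforce

lemma wv_sq_sum:
  assumes e2: "e2 \<in> SV (2^m)"
  shows "(\<Sum>j<2^m. (wv m u e2 j)\<^sup>2) = 2^m * (\<Sum>l<2^m. (u l)\<^sup>2)"
proof -
  define a where "a l = e2 l * u l" for l
  have "(\<Sum>j<2^m. (wv m u e2 j)\<^sup>2) = (\<Sum>j<(2::nat)^m. \<Sum>l<(2::nat)^m. \<Sum>l'<(2::nat)^m. a l * a l' * (hadamard m j l * hadamard m j l'))"
    unfolding wv_def power2_eq_square sum_product a_def by (simp add: mult_ac)
  also have "\<dots> = (\<Sum>l<(2::nat)^m. \<Sum>j<(2::nat)^m. \<Sum>l'<(2::nat)^m. a l * a l' * (hadamard m j l * hadamard m j l'))"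
    by (rule sum.swap)
  also have "\<dots> = (\<Sum>l<(2::nat)^m. \<Sum>l'<(2::nat)^m. \<Sum>j<(2::nat)^m. a l * a l' * (hadamard m j l * hadamard m j l'))"
    by (rule sum.cong[OF refl], rule sum.swap)
  also have "\<dots> = (\<Sum>l<(2::nat)^m. \<Sum>l'<(2::nat)^m. a l * a l' * (\<Sum>j<(2::nat)^m. hadamard m j l * hadamard m j l'))"
    by (simp only: sum_distrib_left)
  also have "\<dots> = (\<Sum>l<(2::nat)^m. \<Sum>l'<(2::nat)^m. a l * a l' * (if l = l' then 2^m else 0))"
    by (intro sum.cong refl) (simp add: had_orth)
  also have "\<dots> = (\<Sum>l<(2::nat)^m. (a l)\<^sup>2 * 2^m)"
    by (simp add: power2_eq_square if_distrib cong: if_cong)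
  also have "\<dots> = 2^m * (\<Sum>l<2^m. (u l)\<^sup>2)"
    unfolding sum_distrib_left
    by (intro sum.cong refl) (simp add: a_def power_mult_distrib SV_sq[OF e2])
  finally show ?thesis .
qed

lemma avg_sum: "avg N (\<lambda>e. \<Sum>j\<in>J. f j e) = (\<Sum>j\<in>J. avg N (f j))"
  unfolding avg_def by (simp add: sum.swap[of _ J] sum_divide_distrib)

lemma wv_moment4: "avg (2^m) (\<lambda>e2. \<Sum>j<2^m. (wv m u e2 j)^4) \<le> 3 * 2^m * (\<Sum>l<2^m. (u l)\<^sup>2)\<^sup>2"
proof -
  have "avg (2^m) (\<lambda>e2. \<Sum>j<2^m. (wv m u e2 j)^4) = (\<Sum>j<2^m. avg (2^m) (\<lambda>e2. (wv m u e2 j)^4))"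
    by (rule avg_sum)
  also have "\<dots> \<le> (\<Sum>j<(2::nat)^m. 3 * (\<Sum>l<2^m. (u l)\<^sup>2)\<^sup>2)"
  proof (rule sum_mono)
    fix j
    have "avg (2^m) (\<lambda>e2. (wv m u e2 j)^4) = avg (2^m) (\<lambda>e2. (\<Sum>l<2^m. (hadamard m j l * u l) * e2 l)^4)"
      unfolding wv_def by (simp add: mult_ac)
    also have "\<dots> \<le> 3 * (\<Sum>l<2^m. (hadamard m j l * u l)\<^sup>2)\<^sup>2" by (rule moment4)
    also have "(\<Sum>l<2^m. (hadamard m j l * u l)\<^sup>2) = (\<Sum>l<2^m. (u l)\<^sup>2)"
      by (simp add: power_mult_distrib had_sq)
    finally show "avg (2^m) (\<lambda>e2. (wv m u e2 j)^4) \<le> 3 * (\<Sum>l<2^m. (u l)\<^sup>2)\<^sup>2" .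
  qed
  also have "\<dots> = 3 * 2^m * (\<Sum>l<2^m. (u l)\<^sup>2)\<^sup>2" by simp
  finally show ?thesis .
qed

definition cv :: "nat \<Rightarrow> (nat \<Rightarrow> real) \<Rightarrow> nat \<Rightarrow> (nat \<Rightarrow> real) \<Rightarrow> nat \<Rightarrow> real" where
  "cv m u k e2 j = hadamard m k j * wv m u e2 j / 2^m"

lemma T_coord_cv: "T_coord m e1 e2 u k = (\<Sum>j<2^m. cv m u k e2 j * e1 j)"
proof -
  have "T_coord m e1 e2 u k = (\<Sum>j<2^m. (1 / 2^m) * (hadamard m k j * e1 j * wv m u e2 j))"
    unfolding T_coord_def wv_def by (rule sum_distrib_left)
  also have "\<dots> = (\<Sum>j<2^m. cv m u k e2 j * e1 j)"
    unfolding cv_def by (intro sum.cong refl) simp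
  finally show ?thesis .
qed

lemma cv_sq_sum: "e2 \<in> SV (2^m) \<Longrightarrow> (\<Sum>j<2^m. (cv m u k e2 j)\<^sup>2) = (\<Sum>l<2^m. (u l)\<^sup>2) / 2^m"
proof -
  assume e2: "e2 \<in> SV (2^m)"
  have "(\<Sum>j<2^m. (cv m u k e2 j)\<^sup>2) = (\<Sum>j<2^m. (wv m u e2 j)\<^sup>2) / (2^m)\<^sup>2"
    unfolding cv_def by (simp add: power_mult_distrib power_divide had_sq sum_divide_distrib)
  also have "\<dots> = (\<Sum>l<2^m. (u l)\<^sup>2) / 2^m"
    unfolding wv_sq_sum[OF e2] by (simp add: power2_eq_square)
  finally show ?thesis .
qed

lemma cv_4_sum: "(\<Sum>j<2^m. (cv m u k e2 j)^4) = (\<Sum>j<2^m. (wv m u e2 j)^4) / (2^m)^4"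
proof -
  have h4: "(hadamard m k j)^4 = 1" for j
    using had_sq[of m k j] by (metis power_mult numeral_times_numeral semiring_norm(12) power_one num_double mult_2)
  show ?thesis unfolding cv_def by (simp add: power_mult_distrib power_divide h4 sum_divide_distrib)
qed

lemma sum_ind_real: "finite A \<Longrightarrow> (\<Sum>x\<in>A. indicator B x :: real) = real (card (A \<inter> B))"
  by (induction A rule: finite_induct) (auto simp: indicator_def card_insert_if Int_insert_left)

definition Fk :: "nat \<Rightarrow> (nat \<Rightarrow> real) \<Rightarrow> nat \<Rightarrow> real \<Rightarrow> real" where
  "Fk m u k x = measure (T_law m u k) {..x}"

lemma SV_ne: "SV N \<noteq> {}"
  unfolding SV_def by (simp add: PiE_eq_empty_iff)

lemma Fk_sum: "Fk m u k x =
   (\<Sum>p\<in>SV (2^m) \<times> SV (2^m). indicator {..x} (T_coord m (fst p) (snd p) u k)) / real (card (SV (2^m) \<times> SV (2^m)))"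
proof -
  let ?S = "SV (2^m) \<times> SV (2^m)"
  let ?f = "\<lambda>(e1, e2). T_coord m e1 e2 u k"
  have fin: "finite ?S" by simp
  have ne: "?S \<noteq> {}" using SV_ne by simp
  have "Fk m u k x = measure (measure_pmf (pmf_of_set ?S)) (?f -` {..x})"
    unfolding Fk_def T_law_def sign_vectors_def SV_def[symmetric] by simp
  also have "\<dots> = card (?S \<inter> ?f -` {..x}) / card ?S"
    by (rule measure_pmf_of_set[OF ne fin])
  also have "real (card (?S \<inter> ?f -` {..x})) = (\<Sum>p\<in>?S. indicator (?f -` {..x}) p)"
    by (rule sum_ind_real[symmetric]) (rule fin)
  also have "(\<Sum>p\<in>?S. indicator (?f -` {..x}) p :: real) = (\<Sum>p\<in>?S. indicator {..x} (T_coord m (fst p) (snd p) u k))"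
    by (intro sum.cong refl) (auto simp: indicator_def case_prod_beta)
  finally show ?thesis .
qed

lemma Fk_mono: "mono (Fk m u k)"
  unfolding Fk_def T_law_def mono_def
  by (auto intro!: measure_pmf.finite_measure_mono)

lemma Fk_01: "0 \<le> Fk m u k x \<and> Fk m u k x \<le> 1"
  unfolding Fk_def T_law_def by simp

lemma Fk_conv:
  assumes dl: "dl > 0"
  shows "(\<integral>z. Fk m u k (t - z) \<partial>ND dl) =
     avg (2^m) (\<lambda>e2. avg (2^m) (\<lambda>e1. Phi ((t - T_coord m e1 e2 u k) / dl)))"
proof -
  interpret N: prob_space "ND dl" by (rule ND_prob[OF dl])
  let ?S = "SV (2^m) \<times> SV (2^m)"
  have cS: "real (card ?S) = 2^(2^m) * 2^(2^m)" by (simp add: card_cartesian_product card_SV)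
  have "(\<integral>z. Fk m u k (t - z) \<partial>ND dl) =
      (\<integral>z. (\<Sum>p\<in>?S. indicator {..t - z} (T_coord m (fst p) (snd p) u k)) / real (card ?S) \<partial>ND dl)"
    unfolding Fk_sum ..
  also have "\<dots> = (\<Sum>p\<in>?S. (\<integral>z. indicator {..t - z} (T_coord m (fst p) (snd p) u k) \<partial>ND dl)) / real (card ?S)"
  proof -
    have ii: "integrable (ND dl) (\<lambda>z. indicator {..t - z} (T_coord m (fst p) (snd p) u k) :: real)" for p
    proof -
      have "(\<lambda>z. indicator {..t - z} (T_coord m (fst p) (snd p) u k) :: real) = indicator {..t - T_coord m (fst p) (snd p) u k}"
        by (auto simp: indicator_def fun_eq_iff)
      then show ?thesis by (simp add: N.emeasure_eq_measure)
    qed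
    have "(\<integral>z. (\<Sum>p\<in>?S. indicator {..t - z} (T_coord m (fst p) (snd p) u k)) / real (card ?S) \<partial>ND dl)
        = (\<integral>z. (\<Sum>p\<in>?S. indicator {..t - z} (T_coord m (fst p) (snd p) u k)) \<partial>ND dl) / real (card ?S)"
      by (rule integral_divide_zero)
    also have "(\<integral>z. (\<Sum>p\<in>?S. indicator {..t - z} (T_coord m (fst p) (snd p) u k) :: real) \<partial>ND dl)
        = (\<Sum>p\<in>?S. (\<integral>z. indicator {..t - z} (T_coord m (fst p) (snd p) u k) \<partial>ND dl))"
      using ii by simp
    finally show ?thesis .
  qed
  also have "(\<Sum>p\<in>?S. (\<integral>z. indicator {..t - z} (T_coord m (fst p) (snd p) u k) \<partial>ND dl))
       = (\<Sum>p\<in>?S. Phi ((t - T_coord m (fst p) (snd p) u k) / dl))"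
  proof (intro sum.cong refl)
    fix p
    have "(\<lambda>z. indicator {..t - z} (T_coord m (fst p) (snd p) u k) :: real) = indicator {..t - T_coord m (fst p) (snd p) u k}"
      by (auto simp: indicator_def fun_eq_iff)
    then show "(\<integral>z. indicator {..t - z} (T_coord m (fst p) (snd p) u k) \<partial>ND dl) = Phi ((t - T_coord m (fst p) (snd p) u k) / dl)"
      using ND_le[OF dl] by simp
  qed
  also have "(\<Sum>p\<in>?S. Phi ((t - T_coord m (fst p) (snd p) u k) / dl))
      = (\<Sum>e1\<in>SV (2^m). \<Sum>e2\<in>SV (2^m). Phi ((t - T_coord m e1 e2 u k) / dl))"
    unfolding sum.cartesian_product by (simp add: case_prod_beta)
  also have "\<dots> = (\<Sum>e2\<in>SV (2^m). \<Sum>e1\<in>SV (2^m). Phi ((t - T_coord m e1 e2 u k) / dl))"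
    by (rule sum.swap)
  finally show ?thesis unfolding cS avg_def
    by (simp add: sum_divide_distrib[symmetric] field_simps)
qed

lemma avg_abs_diff:
  assumes "\<And>e. e \<in> SV N \<Longrightarrow> \<bar>f e - g e\<bar> \<le> b e"
  shows "\<bar>avg N f - avg N g\<bar> \<le> avg N b"
proof -
  have "\<bar>(\<Sum>e\<in>SV N. f e) - (\<Sum>e\<in>SV N. g e)\<bar> = \<bar>\<Sum>e\<in>SV N. f e - g e\<bar>"
    by (simp add: sum_subtractf)
  also have "\<dots> \<le> (\<Sum>e\<in>SV N. \<bar>f e - g e\<bar>)" by (rule sum_abs)
  also have "\<dots> \<le> (\<Sum>e\<in>SV N. b e)" using assms by (intro sum_mono) auto
  finally show ?thesis unfolding avg_def
    by (simp add: diff_divide_distrib[symmetric] abs_divide divide_right_mono)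
qed

lemma Phi_isCont: "isCont Phi x"
  by (rule DERIV_isCont[OF Phi_deriv])

lemma main_bound:
  fixes m k :: nat and u :: "nat \<Rightarrow> real"
  assumes su: "(\<Sum>l<2^m. (u l)\<^sup>2) = 1" and dl: "dl > 0" and lam: "lam \<ge> 0"
  shows "(2 * measure (ND dl) {- (lam * dl)..lam * dl} - 1) * kolmogorov_dist (T_law m u k) (gauss_law (1 / 2^m))
     \<le> Mc / (2 * dl^4 * (2^m)^3) + 2 * (lam * dl) * (q0 * sqrt (2^m)) * measure (ND dl) {- (lam * dl)..lam * dl}"
proof -
  define d :: real where "d = 2^m"
  have d0: "d > 0" by (simp add: d_def)
  define sg where "sg = sqrt (1 / d)"
  have sg0: "sg > 0" using d0 by (simp add: sg_def)
  have sg2: "sg\<^sup>2 = 1 / d" using d0 by (simp add: sg_def)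
  define G where "G x = measure (gauss_law (1 / 2^m)) {..x}" for x
  have G_eq: "G x = Phi (x / sg)" for x
    unfolding G_def using gauss_law_ND[of "1 / 2^m"] ND_le[OF sg0] by (simp add: sg_def d_def)
  define E where "E = Mc / (2 * dl^4 * (2^m)^3)"
  have hyp: "\<bar>(\<integral>z. Fk m u k (t - z) \<partial>ND dl) - (\<integral>z. G (t - z) \<partial>ND dl)\<bar> \<le> E" for t
  proof -
    interpret N: prob_space "ND dl" by (rule ND_prob[OF dl])
    define rho where "rho = sqrt (sg\<^sup>2 + dl\<^sup>2)"
    have IG: "(\<integral>z. G (t - z) \<partial>ND dl) = Phi (t / rho)"
    proof -
      have m: "(\<lambda>z. G (t - z)) \<in> borel_measurable (ND dl)" unfolding G_eq by measurable
      have "(\<integral>z. G (t - z) \<partial>ND dl) = enn2real (\<integral>\<^sup>+ z. ennreal (G (t - z)) \<partial>ND dl)"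
        by (rule integral_eq_nn_integral[OF m]) (simp add: G_eq Phi_nonneg)
      also have "(\<integral>\<^sup>+ z. ennreal (G (t - z)) \<partial>ND dl) = ennreal (Phi (t / rho))"
        unfolding G_eq rho_def by (rule conv_ND[OF sg0 dl])
      finally show ?thesis by (simp add: Phi_nonneg)
    qed
    have IF: "(\<integral>z. Fk m u k (t - z) \<partial>ND dl) = avg (2^m) (\<lambda>e2. avg (2^m) (\<lambda>e1. Phi ((t - T_coord m e1 e2 u k) / dl)))"
      by (rule Fk_conv[OF dl])
    have inner: "\<bar>avg (2^m) (\<lambda>e1. Phi ((t - T_coord m e1 e2 u k) / dl)) - Phi (t / rho)\<bar>
       \<le> Mc / (6 * dl^4) * ((\<Sum>j<2^m. (wv m u e2 j)^4) / (2^m)^4)" if e2: "e2 \<in> SV (2^m)" for e2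
    proof -
      have L: "\<bar>avg (2^m) (\<lambda>e. U dl t 0 (\<Sum>j<2^m. cv m u k e2 j * e j)) - U dl t (0 + (\<Sum>j<2^m. (cv m u k e2 j)\<^sup>2)) 0\<bar>
           \<le> Mc / (6 * dl^4) * (\<Sum>j<2^m. (cv m u k e2 j)^4)"
        by (rule lindeberg[OF dl]) simp
      have a: "avg (2^m) (\<lambda>e. U dl t 0 (\<Sum>j<2^m. cv m u k e2 j * e j)) = avg (2^m) (\<lambda>e1. Phi ((t - T_coord m e1 e2 u k) / dl))"
        unfolding U_def T_coord_cv using dl by simp
      have b: "U dl t (0 + (\<Sum>j<2^m. (cv m u k e2 j)\<^sup>2)) 0 = Phi (t / rho)"
        unfolding U_def rho_def cv_sq_sum[OF e2] su sg2 d_def by (simp add: add.commute)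
      show ?thesis using L unfolding a b cv_4_sum .
    qed
    have "\<bar>avg (2^m) (\<lambda>e2. avg (2^m) (\<lambda>e1. Phi ((t - T_coord m e1 e2 u k) / dl))) - avg (2^m) (\<lambda>_. Phi (t / rho))\<bar>
        \<le> avg (2^m) (\<lambda>e2. Mc / (6 * dl^4) * ((\<Sum>j<2^m. (wv m u e2 j)^4) / (2^m)^4))"
      by (rule avg_abs_diff) (rule inner)
    also have "\<dots> = Mc / (6 * dl^4) / (2^m)^4 * avg (2^m) (\<lambda>e2. \<Sum>j<2^m. (wv m u e2 j)^4)"
      by (subst avg_cmult[symmetric]) (simp add: field_simps)
    also have "\<dots> \<le> Mc / (6 * dl^4) / (2^m)^4 * (3 * 2^m * (\<Sum>l<2^m. (u l)\<^sup>2)\<^sup>2)"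
      by (intro mult_left_mono wv_moment4) (use Mc_pos dl in auto)
    also have "\<dots> = E" unfolding su E_def using Mc_pos dl by (simp add: field_simps power_mult_distrib eval_nat_numeral)
    finally show ?thesis unfolding IF IG avg_const .
  qed
  have Gl: "\<bar>G x - G y\<bar> \<le> (q0 / sg) * \<bar>x - y\<bar>" for x y
  proof -
    have "\<bar>G x - G y\<bar> \<le> q0 * \<bar>x / sg - y / sg\<bar>" unfolding G_eq by (rule Phi_lip_abs)
    also have "\<dots> = (q0 / sg) * \<bar>x - y\<bar>" using sg0 by (simp add: diff_divide_distrib[symmetric] abs_divide)
    finally show ?thesis .
  qed
  have Gc: "continuous_on UNIV G"
    unfolding G_eq by (intro continuous_at_imp_continuous_on ballI isCont_o2[OF _ Phi_isCont]) (use sg0 in \<open>auto intro!: continuous_intros\<close>)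
  have sm: "(2 * measure (ND dl) {- (lam * dl)..lam * dl} - 1) * (SUP t. \<bar>Fk m u k t - G t\<bar>)
      \<le> E + 2 * (lam * dl) * (q0 / sg) * measure (ND dl) {- (lam * dl)..lam * dl}"
    by (rule smoothing[OF dl _ Fk_mono Fk_01 Gc _ Gl hyp refl])
       (use lam dl in \<open>auto simp: G_eq Phi_nonneg Phi_le1\<close>)
  have qs: "q0 / sg = q0 * sqrt (2^m)" using d0 by (simp add: sg_def d_def real_sqrt_divide)
  show ?thesis using sm unfolding kolmogorov_dist_def Fk_def[symmetric] G_def[symmetric] qs E_def .
qed

lemma q0_bounds: "0.39888 \<le> q0 \<and> q0 \<le> 0.39902"
proof -
  have p: "3.141592653588 \<le> pi" "pi \<le> 3.1415926535899" using pi_approx by auto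
  have s1: "2.5062 \<le> sqrt (2 * pi)"
    by (rule real_le_rsqrt) (use p in \<open>simp add: power2_eq_square\<close>)
  have "sqrt (2 * pi) \<le> sqrt (2.507\<^sup>2)" by (rule real_sqrt_le_mono) (use p in \<open>simp add: power2_eq_square\<close>)
  then have s2: "sqrt (2 * pi) \<le> 2.507" by simp
  have "1 / 2.507 \<le> q0" unfolding q0_def using s1 s2 by (intro divide_left_mono) auto
  moreover have "q0 \<le> 1 / 2.5062" unfolding q0_def using s1 by (intro divide_left_mono) auto
  ultimately show ?thesis by simp
qed

lemma C_G_lower: "2.42 \<le> C_G"
proof (rule ccontr)
  assume "\<not> 2.42 \<le> C_G"
  then have lt: "C_G < 2.42" by simp
  have pos: "0 \<le> C_G" unfolding C_G_def by simp
  have "C_G ^ 5 = 5^5 * (3 powr (4/5)) ^ 5 / (pi powr (7/5)) ^ 5"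
    unfolding C_G_def by (simp add: power_divide power_mult_distrib)
  also have "(3 powr (4/5)) ^ 5 = (81::real)"
    by (subst powr_power) (simp_all add: powr_numeral)
  also have "(pi powr (7/5)) ^ 5 = pi ^ 7"
    by (subst powr_power) (simp_all add: powr_numeral)
  finally have c5: "C_G ^ 5 = 253125 / pi ^ 7" by simp
  have "pi ^ 7 \<le> 3.1416 ^ 7" using pi_approx by (intro power_mono) auto
  also have "\<dots> \<le> 3020.35" by (simp add: power_divide eval_nat_numeral)
  finally have "253125 / 3020.35 \<le> C_G ^ 5" unfolding c5 by (intro divide_left_mono) auto
  moreover have "C_G ^ 5 \<le> 2.42 ^ 5" using lt pos by (intro power_mono) auto
  moreover have "(2.42::real) ^ 5 < 253125 / 3020.35" by (simp add: power_divide eval_nat_numeral)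
  ultimately show False by linarith
qed

lemma numeric:
  fixes q C b :: real
  assumes q1: "(2493/6250) \<le> q" and q2: "q \<le> (19951/50000)" and C: "(121/50) \<le> C"
    and b1: "q * (688019 / 375000) \<le> b"
  shows "0 < 2 * b - 1 \<and> q / (59/50)^4 + 2 * (61/50) * (59/50) * q * b \<le> C * (2 * b - 1)"
proof -
  define A :: real where "A = 688019 / 375000"
  have h1: "0 < 2 * b - 1" using b1 q1 unfolding A_def by linarith
  have c2: "0 \<le> 2 * C - 2 * (61/50) * (59/50) * q" using C q2 by linarith
  have F1: "(q * A) * (2 * C - 2 * (61/50) * (59/50) * q) \<le> b * (2 * C - 2 * (61/50) * (59/50) * q)"
    using b1 c2 unfolding A_def by (intro mult_right_mono) auto
  have c3: "0 \<le> 2 * q * A - 1" using q1 unfolding A_def by linarith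
  have F2: "(121/50) * (2 * q * A - 1) \<le> C * (2 * q * A - 1)" using C c3 by (intro mult_right_mono) auto
  have F3: "q * q \<le> (19951/50000) * q" using q1 q2 by (intro mult_right_mono) auto
  have eq1: "C * (2 * b - 1) - (q / (59/50)^4 + 2 * (61/50) * (59/50) * q * b)
      = b * (2 * C - 2 * (61/50) * (59/50) * q) - C - q / (59/50)^4" by (simp add: algebra_simps)
  have eq2: "(q * A) * (2 * C - 2 * (61/50) * (59/50) * q) - C - q / (59/50)^4
      = C * (2 * q * A - 1) - 2 * (61/50) * (59/50) * A * (q * q) - q / (59/50)^4" by (simp add: algebra_simps)
  have "0 \<le> (121/50) * (2 * q * A - 1) - 2 * (61/50) * (59/50) * A * ((19951/50000) * q) - q / (59/50)^4"
    using q1 unfolding A_def by (simp add: power_divide eval_nat_numeral)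
  moreover have "2 * (61/50) * (59/50) * A * (q * q) \<le> 2 * (61/50) * (59/50) * A * ((19951/50000) * q)"
    using F3 unfolding A_def by (intro mult_left_mono) auto
  ultimately have "0 \<le> C * (2 * b - 1) - (q / (59/50)^4 + 2 * (61/50) * (59/50) * q * b)"
    unfolding eq1 using F1 F2 eq2 by linarith
  then show ?thesis using h1 by linarith
qed

theorem mainTheorem3:
  fixes m :: nat
  assumes "m \<ge> 1"
  shows "\<forall>u :: nat \<Rightarrow> real. (\<Sum>l<2^m. (u l)^2) = 1 \<longrightarrow>
           (\<forall>k<2^m. kolmogorov_dist (T_law m u k) (gauss_law (1 / 2^m))
                        \<le> C_G * (2^m) powr (-1/5))"
proof (intro allI impI)
  fix u :: "nat \<Rightarrow> real" and k :: nat
  assume su: "(\<Sum>l<2^m. (u l)^2) = 1" and k: "k < 2^m"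
  define d :: real where "d = 2^m"
  have d0: "d > 0" by (simp add: d_def)
  define x where "x = d powr (-1/5)"
  have x0: "x > 0" using d0 by (simp add: x_def)
  define kap :: real where "kap = 59/50"
  define lam :: real where "lam = 61/50"
  define dl where "dl = kap * x / sqrt d"
  have dl0: "dl > 0" using x0 d0 by (simp add: dl_def kap_def)
  have x5: "x^4 * d = 1 / x"
  proof -
    have "x^5 = d powr (real 5 * (-1/5))" unfolding x_def by (rule powr_power) (use d0 in simp)
    also have "\<dots> = 1 / d" using d0 by (simp add: powr_minus_divide)
    finally have "x^5 = 1 / d" .
    then show ?thesis using x0 d0 by (simp add: field_simps eval_nat_numeral)
  qed
  have sq4: "(sqrt d)^4 = d^2" using d0 by (simp add: power_mult[symmetric] eval_nat_numeral)
  define b where "b = measure (ND dl) {- (lam * dl)..lam * dl}"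
  have MB: "(2 * b - 1) * kolmogorov_dist (T_law m u k) (gauss_law (1 / 2^m))
     \<le> Mc / (2 * dl^4 * (2^m)^3) + 2 * (lam * dl) * (q0 * sqrt (2^m)) * b"
    unfolding b_def by (rule main_bound[OF su dl0]) (simp add: lam_def)
  have e1: "Mc / (2 * dl^4 * (2^m)^3) = q0 / kap^4 * x"
  proof -
    have "dl^4 = kap^4 * x^4 / d^2" unfolding dl_def by (simp add: power_divide power_mult_distrib sq4)
    then have "2 * dl^4 * (2^m)^3 = 2 * kap^4 * (x^4 * d)" using d0 by (simp add: d_def[symmetric] field_simps eval_nat_numeral)
    also have "\<dots> = 2 * kap^4 / x" unfolding x5 by simp
    finally show ?thesis using x0 dl0 by (simp add: Mc_def q0_def kap_def field_simps)
  qed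
  have e2: "2 * (lam * dl) * (q0 * sqrt (2^m)) * b = 2 * lam * kap * q0 * b * x"
    using d0 by (simp add: dl_def d_def[symmetric] field_simps)
  have blow: "q0 * (688019 / 375000) \<le> b"
  proof -
    have "q0 * (2 * lam - lam^3 / 3) \<le> Phi lam - Phi (- lam)" by (rule Phi_interval) (simp add: lam_def)
    also have "\<dots> \<le> b" unfolding b_def by (rule ND_Icc_lower[OF dl0]) (simp add: lam_def)
    finally show ?thesis by (simp add: lam_def power3_eq_cube)
  qed
  have qb: "2493/6250 \<le> q0" "q0 \<le> 19951/50000" using q0_bounds by simp_all
  have Cb: "121/50 \<le> C_G" using C_G_lower by simp
  have N: "0 < 2 * b - 1 \<and> q0 / (59/50)^4 + 2 * (61/50) * (59/50) * q0 * b \<le> C_G * (2 * b - 1)"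
    by (rule numeric[OF qb Cb blow])
  define eta where "eta = kolmogorov_dist (T_law m u k) (gauss_law (1 / 2^m))"
  have "(2 * b - 1) * eta \<le> (q0 / kap^4 + 2 * lam * kap * q0 * b) * x"
    using MB unfolding e1 e2 eta_def by (simp add: algebra_simps)
  also have "\<dots> \<le> (C_G * (2 * b - 1)) * x"
    using N x0 by (intro mult_right_mono) (auto simp: kap_def lam_def)
  finally have "(2 * b - 1) * eta \<le> (2 * b - 1) * (C_G * x)" by (simp add: mult_ac)
  then have "eta \<le> C_G * x" using N by simp
  then show "kolmogorov_dist (T_law m u k) (gauss_law (1 / 2^m)) \<le> C_G * (2^m) powr (-1/5)"
    unfolding eta_def x_def d_def by simp
qed

end
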